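(* Assume $\sigma_1(x)=\tfrac12\sigma_1''(0)\,x(x-a_1)$ and $\sigma_2(x)=\tfrac12\sigma_2''(0)\,x(x-a_2)$ with $\sigma_1''(0)\ne0$, $\sigma_2''(0)\ne0$ and real $0<a_2<a_1$. Let $\Lambda_q=q^{-2}\Big[1+\frac{(1-q^{-1})\tau'(0)}{\frac12\sigma_1''(0)}\Big]$ and $y_0=q^{-1}\Big[1-\frac{(1-q^{-1})}{a_1}\frac{\tau(0)}{\frac12\sigma_1''(0)}\Big]$, and assume $qy_0<0$ and $q^2\Lambda_q<0$. Put $a=a_2$, $b=q^{-1}a_1$, and suppose $q^{-N-1}a=b$ for some $N\in\mathbb{N}_0$. Let $$\rho(x)=|x|^{\alpha}\sqrt{x^{\log_qx-1}}\,(qa/x,\,x/b;q)_\infty,\qquad q^{\alpha}=-\frac{q^{-3}\sigma_2''(0)}{\sigma_1''(0)b}.$$ Then there exist polynomials $P_0,\dots,P_N$, with $P_n$ of degree $n$ a solution of the q-EHT with $\lambda=\lambda_n$, and nonzero constants $d_n^2$, such that for $m,n\in\{0,\dots,N\}$ $$\int_a^{b}P_n(x)P_m(x)\rho(x)\,d_{q^{-1}}x=d_n^2\delta_{mn},$$ i.e. orthogonality with respect to $\rho$ supported on $\{q^{-k}a\}_{k=0}^N$.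
   Context: Throughout $0<q<1$. For a function $y$ and $\zeta\in\{q,q^{-1}\}$, $D_\zeta y(x)=\frac{y(x)-y(\zeta x)}{(1-\zeta)x}$ for $x\ne0$ and $D_\zeta y(0)=y'(0)$; $[n]_q=\frac{1-q^n}{1-q}$. Let $\sigma_1$ be a real polynomial of degree at most two, $\tau(x)=\tau'(0)x+\tau(0)$ a real polynomial with $\tau'(0)\ne0$, and $\sigma_2(x):=q[\sigma_1(x)+(1-q^{-1})x\tau(x)]$. The q-EHT with parameter $n$ is $\sigma_1(x)D_{q^{-1}}D_qy(x)+\tau(x)D_qy(x)+\lambda_ny(x)=0$, $\lambda_n=-[n]_q\big(\tau'(0)+\tfrac12[n-1]_{q^{-1}}\sigma_1''(0)\big)$. $(\beta;q)_\infty=\prod_{k\ge0}(1-\beta q^k)$, $(\beta_1,\dots,\beta_r;q)_\infty=\prod_i(\beta_i;q)_\infty$. For $q^\alpha=c$ ($c\ne0$), $\alpha$ is any complex number with $e^{\alpha\ln q}=c$ and $|x|^\alpha:=e^{\alpha\ln|x|}$; for $x>0$, $\sqrt{x^{\log_qx-1}}:=\exp\big(\tfrac12(\log_qx-1)\ln x\big)$. For $a>0$ and $b=q^{-N-1}a$, $\int_a^{b}f(x)\,d_{q^{-1}}x=(q^{-1}-1)a\sum_{k=0}^{N}q^{-k}f(q^{-k}a)$. *)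

theory Defs
  imports "HOL-Analysis.Analysis" "HOL-Computational_Algebra.Polynomial"
begin

definition qD :: "real \<Rightarrow> (real \<Rightarrow> real) \<Rightarrow> real \<Rightarrow> real" where
  "qD z y x = (if x = 0 then deriv y 0 else (y x - y (z * x)) / ((1 - z) * x))"

text \<open>q-number [k]_q = (1 - q^k)/(1 - q), k an integer (k = n-1 may be -1).\<close>
definition qnum :: "real \<Rightarrow> int \<Rightarrow> real" where
  "qnum q k = (1 - q powi k) / (1 - q)"

definition qpoch_inf :: "real \<Rightarrow> real \<Rightarrow> real" where
  "qpoch_inf beta q = (\<Prod>k. 1 - beta * q ^ k)"

text \<open>Jackson q^-1 integral from a to b = q^(-N-1) a.\<close>
definition qinv_int :: "real \<Rightarrow> real \<Rightarrow> nat \<Rightarrow> (real \<Rightarrow> complex) \<Rightarrow> complex" where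
  "qinv_int q a N f = of_real ((1/q - 1) * a) * (\<Sum>k\<le>N. of_real ((1/q) ^ k) * f ((1/q) ^ k * a))"

end

theory Submission
  imports Defs
begin


lemma qpoch_conv:
  fixes q \<beta> :: real
  assumes "0 < q" "q < 1" "0 \<le> \<beta>" "\<beta> < 1"
  shows "convergent_prod (\<lambda>k. 1 - \<beta> * q ^ k)"
proof -
  have "convergent_prod (\<lambda>k. 1 + (- \<beta> * q ^ k))"
  proof (rule summable_imp_convergent_prod_real)
    have "summable (\<lambda>k. \<beta> * q ^ k)"
      using assms by (intro summable_mult summable_geometric) auto
    then show "summable (\<lambda>k. \<bar>- \<beta> * q ^ k\<bar>)"
      using assms by (simp add: abs_mult)
    fix k
    have "\<beta> * q ^ k \<le> \<beta> * 1" using assms by (intro mult_left_mono power_le_one) auto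
    then show "- \<beta> * q ^ k \<noteq> -1" using assms by auto
  qed
  then show ?thesis by simp
qed

lemma qpoch_pos:
  fixes q \<beta> :: real
  assumes "0 < q" "q < 1" "0 \<le> \<beta>" "\<beta> < 1"
  shows "qpoch_inf \<beta> q > 0"
  unfolding qpoch_inf_def
proof (rule less_0_prodinf[OF qpoch_conv[OF assms]])
  fix i
  have "\<beta> * q ^ i \<le> \<beta> * 1" using assms by (intro mult_left_mono power_le_one) auto
  then show "0 < 1 - \<beta> * q ^ i" using assms by auto
qed

lemma qpoch_shift:
  fixes q \<beta> :: real
  assumes "0 < q" "q < 1" "0 \<le> \<beta>" "\<beta> < 1"
  shows "qpoch_inf \<beta> q = (1 - \<beta>) * qpoch_inf (\<beta> * q) q"
proof -
  have "(\<Prod>n. 1 - \<beta> * q ^ Suc n) = qpoch_inf \<beta> q / (1 - \<beta> * q ^ 0)"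
    unfolding qpoch_inf_def
    by (rule prodinf_split_head[where f="\<lambda>k. 1 - \<beta> * q ^ k", OF qpoch_conv[OF assms]]) (use assms in auto)
  moreover have "(\<Prod>n. 1 - \<beta> * q ^ Suc n) = qpoch_inf (\<beta> * q) q"
    unfolding qpoch_inf_def by (simp add: mult.assoc mult.commute)
  ultimately show ?thesis using assms by (simp add: field_simps)
qed




definition dqm :: "real \<Rightarrow> nat \<Rightarrow> real \<Rightarrow> real" where
  "dqm q k x = (x ^ k - (q * x) ^ k) / ((1 - q) * x)"

lemma mono_alg:
  fixes s1 x a1 q Q P A I X J h t0 t1 :: real
  assumes "A * (1 - q) = 1" "I * q = 1" "X * x = 1" "J * Q = 1" "h * 2 = 1"
  shows "s1 * h * x * (x - a1) *
     (((x * P - q * Q * (x * P)) * (A * X) - (x * P * (I * J) - x * P) * (A * (X * q))) *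
      (- A * q * X)) + (t1 * x + t0) * ((x * P - q * Q * (x * P)) * (A * X)) =
     (1 - q * Q) * A * (t1 + h * ((Q - 1) * J * (- A * q)) * s1) * (x * P) +
     (1 - q * Q) * A * (t0 - s1 * h * a1 * ((Q - 1) * J * (- A * q))) * (x * P) * X"
  using assms by algebra

lemma mono_id:
  fixes q s1 t0 t1 a1 x :: real
  assumes q: "0 < q" "q \<noteq> 1" and x: "x \<noteq> 0"
  shows "(s1 / 2 * x * (x - a1)) * ((dqm q k x - dqm q k (x / q)) / ((1 - 1/q) * x))
         + (t1 * x + t0) * dqm q k x
       = qnum q (int k) * (t1 + 1/2 * qnum (1/q) (int k - 1) * s1) * x ^ k
         + qnum q (int k) * (t0 - s1 / 2 * a1 * qnum (1/q) (int k - 1)) * x ^ k / x"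
proof (cases k)
  case 0
  then show ?thesis by (simp add: dqm_def qnum_def)
next
  case (Suc j)
  have pj: "(1/q) powi (int (Suc j) - 1) = (1/q) ^ j" by simp
  have pk: "q powi (int (Suc j)) = q ^ Suc j" by (simp del: of_nat_Suc)
  have q1: "1 - q \<noteq> 0" "q - 1 \<noteq> 0" using q by auto
  have e1: "(x / q) ^ Suc j = x * x ^ j / (q * q ^ j)" by (simp add: power_divide)
  have e2: "(q * (x / q)) ^ Suc j = x * x ^ j" using q by simp
  have e3: "(q * x) ^ Suc j = q * q ^ j * (x * x ^ j)" by (simp add: power_mult_distrib)
  have e4: "(1/q) ^ j = 1 / q ^ j" by (simp add: power_divide)
  have Qnz: "q ^ j \<noteq> 0" using q by simp
  have e5: "1 - 1/q = - (1 - q) / q" using q by (simp add: field_simps)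
  have e6: "1 - 1/q^j = (q^j - 1) / q^j" using Qnz by (simp add: field_simps)
  have e7: "1 - q * q^j = (1 - q) + q * (1 - q^j)" by (simp add: algebra_simps)
  have i1: "inverse (1 - q) * (1 - q) = 1" "inverse q * q = 1" "inverse x * x = 1"
     "inverse (q^j) * q^j = 1" "inverse (2::real) * 2 = 1"
    using q x q1 Qnz by auto
  show ?thesis unfolding Suc dqm_def qnum_def pj pk e1 e2 e3 e4 e5 e6
    by (simp only: divide_inverse inverse_mult_distrib mult_1_left inverse_inverse_eq power_Suc inverse_minus_eq) (rule mono_alg; use i1 in \<open>simp add: mult.commute\<close>)
qed


lemma poly_sum_le:
  fixes p :: "real poly"
  assumes "degree p \<le> n"
  shows "poly p x = (\<Sum>i\<le>n. coeff p i * x ^ i)"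
proof -
  have "poly p x = (\<Sum>i\<le>degree p. coeff p i * x ^ i)" by (rule poly_altdef)
  also have "\<dots> = (\<Sum>i\<le>n. coeff p i * x ^ i)"
    by (rule sum.mono_neutral_left) (use assms le_degree in force)+
  finally show ?thesis .
qed

lemma qD_sum:
  fixes z x :: real and c :: "nat \<Rightarrow> real"
  assumes "x \<noteq> 0"
  shows "qD z (\<lambda>w. \<Sum>i\<le>n. c i * w ^ i) x = (\<Sum>i\<le>n. c i * (x ^ i - (z * x) ^ i) / ((1 - z) * x))"
  using assms unfolding qD_def
  by (simp add: sum_subtractf[symmetric] sum_divide_distrib[symmetric] algebra_simps)

definition muf :: "real \<Rightarrow> real \<Rightarrow> real \<Rightarrow> nat \<Rightarrow> real" where
  "muf q s1 t1 k = qnum q (int k) * (t1 + 1/2 * qnum (1/q) (int k - 1) * s1)"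
definition nuf :: "real \<Rightarrow> real \<Rightarrow> real \<Rightarrow> real \<Rightarrow> nat \<Rightarrow> real" where
  "nuf q s1 t0 a1 k = qnum q (int k) * (t0 - s1 / 2 * a1 * qnum (1/q) (int k - 1))"

lemma L_sum:
  fixes q sa ta tb aa x :: real and c :: "nat \<Rightarrow> real"
  assumes q: "0 < q" "q \<noteq> 1" and x: "x \<noteq> 0"
  shows "(sa / 2 * x * (x - aa)) * qD (1/q) (qD q (\<lambda>w. \<Sum>i\<le>n. c i * w ^ i)) x
         + (tb * x + ta) * qD q (\<lambda>w. \<Sum>i\<le>n. c i * w ^ i) x
       = (\<Sum>i\<le>n. c i * (muf q sa tb i * x ^ i + nuf q sa ta aa i * x ^ i / x))"
proof -
  have xq: "x / q \<noteq> 0" "(1/q) * x \<noteq> 0" using x q by auto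
  have D1: "qD q (\<lambda>w. \<Sum>i\<le>n. c i * w ^ i) x = (\<Sum>i\<le>n. c i * dqm q i x)"
    using qD_sum[OF x] by (simp add: dqm_def)
  have D2: "qD q (\<lambda>w. \<Sum>i\<le>n. c i * w ^ i) ((1/q) * x) = (\<Sum>i\<le>n. c i * dqm q i (x / q))"
    using qD_sum[OF xq(2)] by (simp add: dqm_def mult.assoc)
  have DD: "qD (1/q) (qD q (\<lambda>w. \<Sum>i\<le>n. c i * w ^ i)) x
      = (\<Sum>i\<le>n. c i * ((dqm q i x - dqm q i (x / q)) / ((1 - 1/q) * x)))"
    unfolding qD_def[of "1/q" _ x] using x D1 D2
    by (simp add: sum_subtractf[symmetric] sum_divide_distrib[symmetric] algebra_simps)
  define E where "E i = (dqm q i x - dqm q i (x / q)) / ((1 - 1/q) * x)" for i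
  define F where "F i = dqm q i x" for i
  have gen: "S * (\<Sum>i\<le>n. c i * E i) + T * (\<Sum>i\<le>n. c i * F i)
      = (\<Sum>i\<le>n. c i * (S * E i + T * F i))" for S T
    by (simp add: sum_distrib_left sum.distrib algebra_simps)
  have "(sa / 2 * x * (x - aa)) * (\<Sum>i\<le>n. c i * E i) + (tb * x + ta) * (\<Sum>i\<le>n. c i * F i)
      = (\<Sum>i\<le>n. c i * ((sa / 2 * x * (x - aa)) * E i + (tb * x + ta) * F i))"
    by (rule gen)
  also have "\<dots> = (\<Sum>i\<le>n. c i * (muf q sa tb i * x ^ i + nuf q sa ta aa i * x ^ i / x))"
    unfolding E_def F_def muf_def nuf_def using mono_id[OF q x] by simp
  finally show ?thesis unfolding DD D1 E_def F_def .
qed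


lemma eig:
  fixes q s1 t0 t1 a1 :: real and P :: "real poly" and \<sigma>1 \<tau> :: "real \<Rightarrow> real"
  assumes q: "0 < q" "q \<noteq> 1"
    and \<sigma>1_def: "\<forall>x. \<sigma>1 x = s1 / 2 * x * (x - a1)"
    and \<tau>_def: "\<forall>x. \<tau> x = t1 * x + t0"
    and deg: "degree P \<le> n"
    and rec: "\<forall>i<n. (muf q s1 t1 i - muf q s1 t1 n) * coeff P i + nuf q s1 t0 a1 (Suc i) * coeff P (Suc i) = 0"
  shows "\<sigma>1 x * qD (1/q) (qD q (poly P)) x + \<tau> x * qD q (poly P) x
            + (- qnum q (int n) * (t1 + 1/2 * qnum (1/q) (int n - 1) * s1)) * poly P x = 0"
proof -
  define c where "c = coeff P"
  define mu where "mu = muf q s1 t1"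
  define nu where "nu = nuf q s1 t0 a1"
  have cz: "c i = 0" if "i > n" for i using deg that unfolding c_def by (simp add: coeff_eq_0)
  have pP: "poly P = (\<lambda>w. \<Sum>i\<le>n. c i * w ^ i)"
    using poly_sum_le[OF deg] unfolding c_def by auto
  have lam: "- qnum q (int n) * (t1 + 1/2 * qnum (1/q) (int n - 1) * s1) = - mu n"
    unfolding mu_def muf_def by simp
  have mu0: "mu 0 = 0" and nu0: "nu 0 = 0" unfolding mu_def muf_def nu_def nuf_def qnum_def by simp_all
  have nu1: "nu 1 = t0" unfolding nu_def nuf_def qnum_def using q by simp
  have rec': "(mu i - mu n) * c i + nu (Suc i) * c (Suc i) = 0" for i
  proof (cases "i < n")
    case True then show ?thesis using rec unfolding mu_def nu_def c_def by blast
  next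
    case False
    then have "c (Suc i) = 0" by (intro cz) auto
    moreover have "i = n \<or> c i = 0" using False cz[of i] by (cases "i = n") auto
    ultimately show ?thesis by auto
  qed
  show ?thesis
  proof (cases "x = 0")
    case True
    have "deriv (poly P) 0 = poly (pderiv P) 0" by (rule DERIV_imp_deriv) simp
    also have "\<dots> = c 1" by (simp add: poly_0_coeff_0 coeff_pderiv c_def)
    finally have d: "qD q (poly P) 0 = c 1" by (simp add: qD_def)
    have p0: "poly P 0 = c 0" by (simp add: poly_0_coeff_0 c_def)
    have "t0 * c 1 - mu n * c 0 = 0"
      using rec'[of 0] mu0 nu1 by (simp add: algebra_simps)
    moreover have "\<sigma>1 0 = 0" using \<sigma>1_def[rule_format, of 0] by simp
    ultimately show ?thesis using True d p0 \<tau>_def lam by simp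
  next
    case False
    have L: "\<sigma>1 x * qD (1/q) (qD q (poly P)) x + \<tau> x * qD q (poly P) x
        = (\<Sum>i\<le>n. c i * (mu i * x ^ i + nu i * x ^ i / x))"
      unfolding pP \<sigma>1_def[rule_format] \<tau>_def[rule_format] mu_def nu_def
      by (rule L_sum[OF q False])
    define g where "g i = c i * nu i * x ^ i / x" for i
    have "(\<Sum>i\<le>Suc n. g i) = g 0 + (\<Sum>i\<le>n. g (Suc i))" by (rule sum.atMost_Suc_shift)
    moreover have "(\<Sum>i\<le>Suc n. g i) = (\<Sum>i\<le>n. g i)" using cz[of "Suc n"] by (simp add: g_def)
    ultimately have sh: "(\<Sum>i\<le>n. g i) = (\<Sum>i\<le>n. c (Suc i) * nu (Suc i) * x ^ i)"
      using nu0 False by (simp add: g_def mult.assoc)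
    have "(\<Sum>i\<le>n. c i * (mu i * x ^ i + nu i * x ^ i / x)) - mu n * (\<Sum>i\<le>n. c i * x ^ i)
       = (\<Sum>i\<le>n. ((mu i - mu n) * c i) * x ^ i) + (\<Sum>i\<le>n. g i)"
      by (simp add: g_def sum_distrib_left sum.distrib sum_subtractf algebra_simps sum_divide_distrib)
    also have "\<dots> = (\<Sum>i\<le>n. ((mu i - mu n) * c i + nu (Suc i) * c (Suc i)) * x ^ i)"
      unfolding sh by (simp add: sum.distrib[symmetric] algebra_simps)
    also have "\<dots> = 0" using rec' by simp
    finally have Z: "(\<Sum>i\<le>n. c i * (mu i * x ^ i + nu i * x ^ i / x)) - mu n * (\<Sum>i\<le>n. c i * x ^ i) = 0" .
    show ?thesis unfolding lam L using Z by (simp add: pP)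
  qed
qed




fun cfr :: "(nat \<Rightarrow> real) \<Rightarrow> (nat \<Rightarrow> real) \<Rightarrow> nat \<Rightarrow> nat \<Rightarrow> real" where
  "cfr mu nu n 0 = 1"
| "cfr mu nu n (Suc j) = nu (n - j) * cfr mu nu n j / (mu n - mu (n - Suc j))"

definition cP :: "(nat \<Rightarrow> real) \<Rightarrow> (nat \<Rightarrow> real) \<Rightarrow> nat \<Rightarrow> real poly" where
  "cP mu nu n = Poly (map (\<lambda>i. cfr mu nu n (n - i)) [0..<Suc n])"

lemma coeff_cP: "coeff (cP mu nu n) i = (if i \<le> n then cfr mu nu n (n - i) else 0)"
  unfolding cP_def by (auto simp: nth_default_def nth_append simp del: upt_Suc)

lemma cP_props:
  assumes "\<forall>i<n. mu i \<noteq> mu n"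
  shows "degree (cP mu nu n) = n"
    "\<forall>i<n. (mu i - mu n) * coeff (cP mu nu n) i + nu (Suc i) * coeff (cP mu nu n) (Suc i) = 0"
proof -
  show "degree (cP mu nu n) = n"
  proof (rule antisym)
    show "degree (cP mu nu n) \<le> n" by (rule degree_le) (simp add: coeff_cP)
    show "n \<le> degree (cP mu nu n)" by (rule le_degree) (simp add: coeff_cP)
  qed
  show "\<forall>i<n. (mu i - mu n) * coeff (cP mu nu n) i + nu (Suc i) * coeff (cP mu nu n) (Suc i) = 0"
  proof (intro allI impI)
    fix i assume i: "i < n"
    define j where "j = n - Suc i"
    have nj: "n - i = Suc j" "n - j = Suc i" "n - Suc j = i" using i unfolding j_def by auto
    have ne: "mu n - mu i \<noteq> 0" using assms i by auto
    have "coeff (cP mu nu n) i = nu (Suc i) * coeff (cP mu nu n) (Suc i) / (mu n - mu i)"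
      using i by (simp add: coeff_cP nj j_def[symmetric])
    then show "(mu i - mu n) * coeff (cP mu nu n) i + nu (Suc i) * coeff (cP mu nu n) (Suc i) = 0"
      using ne by (simp add: field_simps)
  qed
qed






lemma muf_closed:
  assumes q: "0 < q" "q < 1"
  shows "muf q s1 t1 n = (1 - q^n) * ((t1 * (1 - q) - s1/2 * q) * q^n + s1/2 * q^2) / (q^n * (1-q)^2)"
proof (cases n)
  case 0 then show ?thesis by (simp add: muf_def qnum_def)
next
  case (Suc j)
  have pj: "(1/q) powi (int (Suc j) - 1) = 1 / q ^ j" by (simp add: power_divide)
  have pk: "q powi (int (Suc j)) = q ^ Suc j" by (simp del: of_nat_Suc)
  define p where "p = 1 - q"
  define Q where "Q = q ^ j"
  have p0: "p \<noteq> 0" "q \<noteq> 0" using q by (auto simp: p_def)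
  have Q0: "Q \<noteq> 0" using q by (simp add: Q_def)
  have r1: "1 - 1 / q = - p / q" using q by (simp add: p_def field_simps)
  have r2: "1 - 1 / Q = (Q - 1) / Q" using Q0 by (simp add: field_simps)
  show ?thesis unfolding Suc muf_def qnum_def pj pk power_Suc Q_def[symmetric] p_def[symmetric] r1 r2
    using p0 Q0 by (simp add: field_simps power2_eq_square)
qed

lemma muf_inj:
  assumes q: "0 < q" "q < 1" and s1: "s1 \<noteq> 0"
    and Lq: "q^2 * ((1/q)^2 * (1 + (1 - 1/q) * t1 / (s1 / 2))) < 0"
    and ne: "n \<noteq> m"
  shows "muf q s1 t1 n \<noteq> muf q s1 t1 m"
proof
  assume eq: "muf q s1 t1 n = muf q s1 t1 m"
  define s where "s = s1 / 2"
  define K where "K = t1 * (1 - q) - s * q"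
  define u where "u = q ^ n"
  define v where "v = q ^ m"
  define p where "p = 1 - q"
  have p0: "p \<noteq> 0" using q by (simp add: p_def)
  have u: "u > 0" and v: "v > 0" using q by (simp_all add: u_def v_def)
  have L1: "1 + (1 - 1/q) * t1 / s < 0" using Lq q unfolding s_def by (simp add: power_divide)
  have ss: "s \<noteq> 0" using s1 by (simp add: s_def)
  have "s^2 * (1 + (1 - 1/q) * t1 / s) < 0"
    using L1 ss by (simp add: mult_pos_neg)
  moreover have "s^2 * (1 + (1 - 1/q) * t1 / s) = s^2 + (1 - 1/q) * t1 * s"
    using ss by (simp add: field_simps power2_eq_square)
  ultimately have L2: "s^2 + (1 - 1/q) * t1 * s < 0" by simp
  have Ks: "K * s = - q * (s^2 + (1 - 1/q) * t1 * s)" using q unfolding K_def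
    by (simp add: field_simps power2_eq_square)
  have Ksp: "K * s > 0" unfolding Ks using L2 q by (simp add: mult_pos_neg)
  have "muf q s1 t1 n - muf q s1 t1 m = (v - u) * (s * q^2 / (u * v) + K) / (1 - q)^2"
    unfolding muf_closed[OF q] u_def[symmetric] v_def[symmetric] s_def[symmetric] K_def[symmetric] p_def[symmetric]
    using u v p0 by (simp add: field_simps power2_eq_square) (simp add: K_def p_def algebra_simps)
  then have "(v - u) * (s * q^2 / (u * v) + K) = 0" using eq q by simp
  moreover have "s * (s * q^2 / (u * v) + K) > 0"
  proof -
    have "s * (s * q^2 / (u * v) + K) = s^2 * q^2 / (u * v) + K * s"
      by (simp add: algebra_simps power2_eq_square)
    moreover have "s^2 * q^2 / (u * v) > 0" using u v q ss by simp
    ultimately show ?thesis using Ksp by simp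
  qed
  ultimately have "v = u" by auto
  then have "q ^ m = q ^ n" by (simp add: u_def v_def)
  then show False using ne q by (simp add: power_inject_exp')
qed




lemma L3:
  fixes q X S T :: real and f :: "real \<Rightarrow> real"
  assumes q: "0 < q" "q < 1" and X: "X \<noteq> 0"
  shows "S * qD (1/q) (qD q f) X + T * qD q f X
     = q^2 * S / ((1-q)^2 * X^2) * (f (X/q) - f X) + (q * S - (1-q) * X * T) / ((1-q)^2 * X^2) * (f (q*X) - f X)"
proof -
  define p where "p = 1 - q"
  have p0: "p \<noteq> 0" "q \<noteq> 0" using q by (auto simp: p_def)
  have X': "(1/q) * X \<noteq> 0" using X q by simp
  have e1: "q * (1/q * X) = X" using q by simp
  have e2: "1 - 1/q = - p / q" using q by (simp add: p_def field_simps)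
  have e3: "1 / q * X = X / q" by simp
  show ?thesis
    unfolding qD_def[of "1/q"] using X X' unfolding if_not_P[OF X] if_not_P[OF X']
    unfolding qD_def if_not_P[OF X] if_not_P[OF X'] e1 e2 e3 p_def[symmetric]
    using p0 X by (simp add: field_simps power2_eq_square)
qed




lemma green:
  fixes r Aa Cc F Fm G :: "nat \<Rightarrow> real" and N :: nat
  assumes AN: "Aa N = 0" and C0: "Cc 0 = 0"
    and sym: "\<forall>k<N. r k * Aa k = r (Suc k) * Cc (Suc k)"
    and Fm: "\<forall>k. Fm (Suc k) = F k"
  shows "(\<Sum>k\<le>N. r k * (Aa k * (F (Suc k) - F k) + Cc k * (Fm k - F k)) * G k)
       = - (\<Sum>k<N. r k * Aa k * (F (Suc k) - F k) * (G (Suc k) - G k))"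
proof -
  have s1: "(\<Sum>k\<le>N. r k * Aa k * (F (Suc k) - F k) * G k) = (\<Sum>k<N. r k * Aa k * (F (Suc k) - F k) * G k)"
    unfolding lessThan_Suc_atMost[symmetric] using AN by simp
  have "(\<Sum>k\<le>N. r k * Cc k * (Fm k - F k) * G k) = (\<Sum>k<Suc N. r k * Cc k * (Fm k - F k) * G k)"
    unfolding lessThan_Suc_atMost by simp
  also have "\<dots> = (\<Sum>k<N. r (Suc k) * Cc (Suc k) * (Fm (Suc k) - F (Suc k)) * G (Suc k))"
    unfolding sum.lessThan_Suc_shift using C0 by simp
  also have "\<dots> = (\<Sum>k<N. r k * Aa k * (F k - F (Suc k)) * G (Suc k))"
    using sym Fm by (intro sum.cong) auto
  finally have s2: "(\<Sum>k\<le>N. r k * Cc k * (Fm k - F k) * G k) = \<dots>" .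
  have "(\<Sum>k\<le>N. r k * (Aa k * (F (Suc k) - F k) + Cc k * (Fm k - F k)) * G k)
      = (\<Sum>k\<le>N. r k * Aa k * (F (Suc k) - F k) * G k) + (\<Sum>k\<le>N. r k * Cc k * (Fm k - F k) * G k)"
    by (simp add: sum.distrib[symmetric] algebra_simps)
  also have "\<dots> = (\<Sum>k<N. r k * Aa k * (F (Suc k) - F k) * G k + r k * Aa k * (F k - F (Suc k)) * G (Suc k))"
    unfolding s1 s2 by (simp add: sum.distrib)
  also have "\<dots> = - (\<Sum>k<N. r k * Aa k * (F (Suc k) - F k) * (G (Suc k) - G k))"
    by (simp add: sum_negf[symmetric] algebra_simps)
  finally show ?thesis .
qed


theorem theorem4p12:
  fixes q s1 s2 t0 t1 a1 a2 :: real and N :: nat and \<alpha> :: complex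
    and \<sigma>1 \<tau> :: "real \<Rightarrow> real"
  assumes q: "0 < q" "q < 1"
    and \<sigma>1_def: "\<forall>x. \<sigma>1 x = s1 / 2 * x * (x - a1)"
    and \<tau>_def: "\<forall>x. \<tau> x = t1 * x + t0"
    and t1: "t1 \<noteq> 0"
    and s1: "s1 \<noteq> 0" and s2: "s2 \<noteq> 0"
    and \<sigma>2: "\<forall>x. q * (\<sigma>1 x + (1 - 1/q) * x * \<tau> x) = s2 / 2 * x * (x - a2)"
    and a: "0 < a2" "a2 < a1"
    and y0: "q * ((1/q) * (1 - (1 - 1/q) / a1 * (t0 / (s1 / 2)))) < 0"
    and Lq: "q^2 * ((1/q)^2 * (1 + (1 - 1/q) * t1 / (s1 / 2))) < 0"
    and N: "(1/q) ^ (N + 1) * a2 = a1 / q"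
    and alpha: "exp (\<alpha> * of_real (ln q)) = of_real (- ((1/q)^3 * s2) / (s1 * (a1 / q)))"
  shows "\<exists>(P :: nat \<Rightarrow> real poly) (d :: nat \<Rightarrow> complex).
    (\<forall>n\<le>N. degree (P n) = n \<and> d n \<noteq> 0 \<and>
       (\<forall>x. \<sigma>1 x * qD (1/q) (qD q (poly (P n))) x + \<tau> x * qD q (poly (P n)) x
            + (- qnum q (int n) * (t1 + 1/2 * qnum (1/q) (int n - 1) * s1)) * poly (P n) x = 0)) \<and>
    (\<forall>m\<le>N. \<forall>n\<le>N.
       qinv_int q a2 N (\<lambda>x. of_real (poly (P n) x * poly (P m) x) *
          (exp (\<alpha> * of_real (ln \<bar>x\<bar>)) *
           of_real (exp (1/2 * (log q x - 1) * ln x)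
                    * qpoch_inf (q * a2 / x) q * qpoch_inf (x / (a1 / q)) q)))
       = (if m = n then d n else 0))"
proof -
  have q0: "q \<noteq> 0" "q \<noteq> 1" using q by auto
  define mu where "mu = muf q s1 t1"
  define nu where "nu = nuf q s1 t0 a1"
  define P where "P = cP mu nu"
  have muinj: "mu n \<noteq> mu m" if "n \<noteq> m" for n m
    unfolding mu_def by (rule muf_inj[OF q s1 Lq that])
  have degP: "degree (P n) = n" for n
    unfolding P_def by (rule cP_props(1)) (use muinj in auto)
  have recP: "\<forall>i<n. (mu i - mu n) * coeff (P n) i + nu (Suc i) * coeff (P n) (Suc i) = 0" for n
    unfolding P_def by (rule cP_props(2)) (use muinj in auto)
  have eqP: "\<sigma>1 x * qD (1/q) (qD q (poly (P n))) x + \<tau> x * qD q (poly (P n)) x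
            + (- qnum q (int n) * (t1 + 1/2 * qnum (1/q) (int n - 1) * s1)) * poly (P n) x = 0" for n x
    by (rule eig[OF q(1) q0(2) \<sigma>1_def \<tau>_def]) (use degP recP in \<open>auto simp: mu_def nu_def\<close>)
  have eqP': "\<sigma>1 x * qD (1/q) (qD q (poly (P n))) x + \<tau> x * qD q (poly (P n)) x = mu n * poly (P n) x" for n x
    using eqP[of x n] unfolding mu_def muf_def by (simp add: algebra_simps)
  define xk where "xk k = (1/q)^k * a2" for k
  define cc where "cc = - ((1/q)^3 * s2) / (s1 * (a1 / q))"
  define E where "E x = exp (1/2 * (log q x - 1) * ln x)" for x
  define w where "w k = E (xk k) * qpoch_inf (q * a2 / xk k) q * qpoch_inf (xk k / (a1/q)) q" for k
  define r where "r k = (1/q)^k * w k / cc^k" for k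
  define Cst where "Cst = exp (\<alpha> * of_real (ln a2))"
  define S where "S n m = (\<Sum>k\<le>N. r k * (poly (P n) (xk k) * poly (P m) (xk k)))" for n m
  have key: "qinv_int q a2 N (\<lambda>x. of_real (poly (P n) x * poly (P m) x) *
          (exp (\<alpha> * of_real (ln \<bar>x\<bar>)) *
           of_real (exp (1/2 * (log q x - 1) * ln x)
                    * qpoch_inf (q * a2 / x) q * qpoch_inf (x / (a1 / q)) q)))
       = of_real ((1/q - 1) * a2) * Cst * of_real (S n m)" for n m
  proof -
    have ccnz: "cc \<noteq> 0" using alpha unfolding cc_def[symmetric]
      by (metis exp_not_eq_zero of_real_0)
    have lnx: "ln \<bar>xk k\<bar> = ln a2 - real k * ln q" for k
    proof -
      have "\<bar>xk k\<bar> = (1/q)^k * a2" using q a by (simp add: xk_def)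
      then show ?thesis using q a by (simp add: ln_mult ln_realpow ln_div)
    qed
    have ex: "exp (\<alpha> * of_real (ln \<bar>xk k\<bar>)) = Cst / of_real cc ^ k" for k
    proof -
      have "\<alpha> * of_real (ln \<bar>xk k\<bar>) = \<alpha> * of_real (ln a2) - of_nat k * (\<alpha> * of_real (ln q))"
        unfolding lnx by (simp add: algebra_simps)
      then have "exp (\<alpha> * of_real (ln \<bar>xk k\<bar>)) = exp (\<alpha> * of_real (ln a2)) / exp (\<alpha> * of_real (ln q)) ^ k"
        by (simp add: exp_diff exp_of_nat_mult)
      then show ?thesis using alpha unfolding cc_def[symmetric] Cst_def by simp
    qed
    have trm: "of_real ((1/q)^k) * (of_real (poly (P n) (xk k) * poly (P m) (xk k)) *
          (exp (\<alpha> * of_real (ln \<bar>xk k\<bar>)) *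
           of_real (exp (1/2 * (log q (xk k) - 1) * ln (xk k))
                    * qpoch_inf (q * a2 / xk k) q * qpoch_inf (xk k / (a1 / q)) q)))
        = Cst * of_real (r k * (poly (P n) (xk k) * poly (P m) (xk k)))" for k
      unfolding ex r_def w_def E_def using ccnz by (simp add: field_simps)
    show ?thesis
      unfolding qinv_int_def xk_def[symmetric] trm S_def
      by (simp add: sum_distrib_left mult.assoc)
  qed
  have xpos: "xk k > 0" for k using q a by (simp add: xk_def)
  have xSuc: "xk (Suc k) = xk k / q" for k by (simp add: xk_def)
  have qxSuc: "q * xk (Suc k) = xk k" for k using q by (simp add: xk_def)
  have xge: "a2 \<le> xk k" for k
  proof -
    have "1 \<le> (1/q)^k" using q by (intro one_le_power) simp
    then show ?thesis using mult_right_mono[of 1 "(1/q)^k" a2] a unfolding xk_def by simp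
  qed
  have xN: "xk N = a1"
  proof -
    have "(1/q) ^ (N + 1) * a2 = (1/q) * xk N" by (simp add: xk_def)
    then show ?thesis using N q by simp
  qed
  have xle: "xk k \<le> a1" if "k \<le> N" for k
  proof -
    have "(1/q)^k \<le> (1/q)^N" using q that by (intro power_increasing) simp_all
    then have "(1/q)^k * a2 \<le> (1/q)^N * a2" using a by (intro mult_right_mono) auto
    then show ?thesis using xN unfolding xk_def by simp
  qed
  have s2eq: "s2 = q * (s1 + 2 * (1 - 1/q) * t1)"
  proof -
    have e1: "q * (\<sigma>1 1 + (1 - 1/q) * 1 * \<tau> 1) = s2 / 2 * 1 * (1 - a2)" using \<sigma>2 by blast
    have e2: "q * (\<sigma>1 (-1) + (1 - 1/q) * (-1) * \<tau> (-1)) = s2 / 2 * (-1) * (-1 - a2)" using \<sigma>2 by blast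
    have v: "\<sigma>1 1 = s1/2 * (1 - a1)" "\<sigma>1 (-1) = s1/2 * (1 + a1)" "\<tau> 1 = t1 + t0" "\<tau> (-1) = t0 - t1"
      unfolding \<sigma>1_def[rule_format] \<tau>_def[rule_format] by (simp_all add: field_simps)
    have "q * (s1/2 * (1 - a1) + (1 - 1/q) * 1 * (t1 + t0)) + q * (s1/2 * (1 + a1) + (1 - 1/q) * (-1) * (t0 - t1))
        = s2 / 2 * 1 * (1 - a2) + s2 / 2 * (-1) * (-1 - a2)"
      using e1 e2 unfolding v by simp
    then have "(4*q*q) * (q * s1 + q * (t1 * 2)) = (4*q*q) * (s2 + t1 * 2)" using q0
      by (simp add: field_simps)
    then have "q * s1 + q * (t1 * 2) = s2 + t1 * 2" using q0 by simp
    then have "q * s1 + 2 * (q - 1) * t1 = s2" by (simp add: algebra_simps)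
    moreover have "q * (s1 + 2 * (1 - 1/q) * t1) = q * s1 + 2 * (q - 1) * t1" using q0 by (simp add: field_simps)
    ultimately show ?thesis by simp
  qed
  have s12: "s1 * s2 < 0"
  proof -
    have L1: "1 + (1 - 1/q) * t1 / (s1/2) < 0" using Lq q by (simp add: power_divide)
    have "s1 * s2 = q * s1^2 * (1 + (1 - 1/q) * t1 / (s1/2))"
      unfolding s2eq using s1 by (simp add: field_simps power2_eq_square)
    also have "\<dots> < 0" using L1 q s1 by (simp add: mult_pos_neg)
    finally show ?thesis .
  qed
  have ccpos: "cc > 0"
  proof -
    have "cc = - (s1 * s2) / (s1^2 * (a1 * q^2))" unfolding cc_def using q s1
      by (simp add: field_simps power2_eq_square power3_eq_cube)
    moreover have "s1^2 * (a1 * q^2) > 0" using s1 a q by simp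
    ultimately show ?thesis using s12 by (simp add: divide_neg_pos)
  qed
  have b1: "0 \<le> q * a2 / xk k" "q * a2 / xk k < 1" for k
  proof -
    show "0 \<le> q * a2 / xk k" using q a xpos[of k] by simp
    have "q * a2 < 1 * a2" using q a by (intro mult_strict_right_mono) auto
    then have "q * a2 < xk k" using xge[of k] by simp
    then show "q * a2 / xk k < 1" using xpos[of k] by simp
  qed
  have b2: "0 \<le> xk k / (a1 / q)" "xk k / (a1 / q) < 1" if "k \<le> N" for k
  proof -
    show "0 \<le> xk k / (a1 / q)" using q a xpos[of k] by simp
    have "xk k * q < xk k * 1" using q xpos[of k] by (intro mult_strict_left_mono) auto
    then have "xk k * q < a1" using xle[OF that] by simp
    then show "xk k / (a1 / q) < 1" using q a by (simp add: field_simps)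
  qed
  have rpos: "r k > 0" if "k \<le> N" for k
  proof -
    have "w k > 0" unfolding w_def E_def
      using qpoch_pos[OF q b1(1,2)[of k]] qpoch_pos[OF q b2(1,2)[OF that]] by simp
    then show ?thesis unfolding r_def using q ccpos by simp
  qed
  have Spos: "S n n > 0" if "n \<le> N" for n
  proof -
    have "coeff (P n) n = 1" by (simp add: P_def coeff_cP)
    then have Pnz: "P n \<noteq> 0" by auto
    have "\<exists>k\<le>N. poly (P n) (xk k) \<noteq> 0"
    proof (rule ccontr)
      assume "\<not> ?thesis"
      then have sub: "xk ` {..N} \<subseteq> {x. poly (P n) x = 0}" by auto
      have inj: "inj_on xk {..N}"
      proof (rule inj_onI)
        fix i j assume "xk i = xk j"
        then have "(1/q)^i = (1/q)^j" using a unfolding xk_def by simp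
        then show "i = j" using q by (simp add: power_inject_exp')
      qed
      have "Suc N = card (xk ` {..N})" using card_image[OF inj] by simp
      also have "\<dots> \<le> card {x. poly (P n) x = 0}"
        using sub poly_roots_finite[OF Pnz] by (rule card_mono[rotated])
      also have "\<dots> \<le> n" using card_poly_roots_bound[OF Pnz] degP by simp
      finally show False using that by simp
    qed
    then obtain k0 where k0: "k0 \<le> N" "poly (P n) (xk k0) \<noteq> 0" by blast
    have "0 < poly (P n) (xk k0) * poly (P n) (xk k0)" using k0(2) not_real_square_gt_zero by blast
    then have "0 < r k0 * (poly (P n) (xk k0) * poly (P n) (xk k0))"
      using rpos[OF k0(1)] by (rule mult_pos_pos[rotated])
    also have "\<dots> \<le> S n n" unfolding S_def
    proof (rule member_le_sum)
      fix x assume "x \<in> {..N} - {k0}"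
      then have rx: "0 < r x" using rpos by auto
      show "0 \<le> r x * (poly (P n) (xk x) * poly (P n) (xk x))"
        by (rule mult_nonneg_nonneg) (use rx in auto)
    qed (use k0 in auto)
    finally show ?thesis .
  qed
  define sig2 where "sig2 X = q * \<sigma>1 X - (1-q) * X * \<tau> X" for X
  have sig2_eq: "sig2 X = s2/2 * X * (X - a2)" for X
  proof -
    have "sig2 X = q * (\<sigma>1 X + (1 - 1/q) * X * \<tau> X)" unfolding sig2_def using q0
      by (simp add: field_simps)
    then show ?thesis using \<sigma>2 by simp
  qed
  have lnq: "ln q \<noteq> 0" using q by simp
  have Eratio: "E (X / q) = E X * q / X" if X0: "X > 0" for X
  proof -
    have h: "1/2 * (log q (X/q) - 1) * ln (X/q) = 1/2 * (log q X - 1) * ln X + (ln q - ln X)"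
      unfolding log_def using X0 q lnq by (simp add: ln_div field_simps)
    have "E (X/q) = exp (1/2 * (log q X - 1) * ln X + (ln q - ln X))" unfolding E_def h by (rule refl)
    then have "E (X/q) = E X * exp (ln q - ln X)" unfolding E_def exp_add by simp
    then show ?thesis using X0 q by (simp add: exp_diff)
  qed
  have a10: "a1 \<noteq> 0" using a by simp
  have wsym: "r k * \<sigma>1 (xk k) = r (Suc k) * sig2 (xk (Suc k))" if k: "k < N" for k
  proof -
    define X where "X = xk k"
    have X0: "X > 0" "X \<noteq> 0" using xpos[of k] by (auto simp: X_def)
    have xs: "xk (Suc k) = X / q" using xSuc by (simp add: X_def)
    have p1: "qpoch_inf (q * a2 / X) q = (1 - q*a2/X) * qpoch_inf (q * a2 / (X/q)) q"
    proof -
      have "q * a2 / X * q = q * a2 / (X/q)" using q0 by (simp add: field_simps)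
      then show ?thesis using qpoch_shift[OF q b1[of k]] unfolding X_def by simp
    qed
    have p2: "qpoch_inf ((X/q) / (a1/q)) q = (1 - (X/q)/(a1/q)) * qpoch_inf (X / (a1/q)) q"
    proof -
      have "(X/q) / (a1/q) * q = X / (a1/q)" using q0 by (simp add: field_simps)
      then show ?thesis using qpoch_shift[OF q b2[of "Suc k"]] k xs by simp
    qed
    have rk: "r k = (1/q)^k / cc^k * E X * qpoch_inf (q * a2 / X) q * qpoch_inf (X / (a1/q)) q"
      unfolding r_def w_def X_def by simp
    have rk1: "r (Suc k) = (1/q)^k / cc^k * ((1/q) / cc) * E (X/q) * qpoch_inf (q * a2 / (X/q)) q
        * qpoch_inf ((X/q) / (a1/q)) q"
      unfolding r_def w_def xs by (simp add: field_simps)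
    have core: "z * e * ((1 - q*a2/X) * A) * B * (s1/2*X*(X-a1))
        = z * ((1/q) / cc) * (e * q / X) * A * ((1 - (X/q)/(a1/q)) * B) * (s2/2*(X/q)*(X/q - a2))" for z e A B
      unfolding cc_def using q0 X0 a10 s1 s2 by (simp add: field_simps power3_eq_cube)
    show ?thesis
      unfolding X_def[symmetric] xs rk rk1 p1 p2 Eratio[OF X0(1)] sig2_eq \<sigma>1_def[rule_format]
      using core by (simp add: mult.assoc)
  qed
  define Aa where "Aa k = q^2 * \<sigma>1 (xk k) / ((1-q)^2 * (xk k)^2)" for k
  define Cc where "Cc k = sig2 (xk k) / ((1-q)^2 * (xk k)^2)" for k
  define T where "T n m = (\<Sum>k<N. r k * Aa k * (poly (P n) (xk (Suc k)) - poly (P n) (xk k))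
                          * (poly (P m) (xk (Suc k)) - poly (P m) (xk k)))" for n m
  have Lk: "mu n * poly (P n) (xk k) = Aa k * (poly (P n) (xk (Suc k)) - poly (P n) (xk k))
      + Cc k * (poly (P n) (q * xk k) - poly (P n) (xk k))" for n k
  proof -
    have X0: "xk k \<noteq> 0" using xpos[of k] by simp
    show ?thesis
      using eqP'[where n=n and x="xk k"] L3[OF q X0, of "\<sigma>1 (xk k)" "poly (P n)" "\<tau> (xk k)"]
      unfolding Aa_def Cc_def sig2_def xSuc by simp
  qed
  have AN: "Aa N = 0" unfolding Aa_def xN \<sigma>1_def[rule_format] by simp
  have x0: "xk 0 = a2" by (simp add: xk_def)
  have C0: "Cc 0 = 0" unfolding Cc_def x0 sig2_eq by simp
  have symk: "\<forall>k<N. r k * Aa k = r (Suc k) * Cc (Suc k)"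
  proof (intro allI impI)
    fix k assume k: "k < N"
    have X0: "xk k \<noteq> 0" using xpos[of k] by simp
    have gen: "Rv / (D * (Y/q)^2) = q^2 / (D * Y^2) * Rv" if "D \<noteq> 0" "Y \<noteq> 0" for D Rv Y
      using that q0 by (simp add: field_simps power2_eq_square)
    have D0: "(1-q)^2 \<noteq> 0" using q0 by simp
    have "r (Suc k) * Cc (Suc k) = (r (Suc k) * sig2 (xk k / q)) / ((1-q)^2 * (xk k / q)^2)"
      unfolding Cc_def xSuc[of k] by simp
    also have "\<dots> = q^2 / ((1-q)^2 * (xk k)^2) * (r (Suc k) * sig2 (xk k / q))" by (rule gen[OF D0 X0])
    also have "\<dots> = q^2 / ((1-q)^2 * (xk k)^2) * (r k * \<sigma>1 (xk k))" using wsym[OF k] xSuc[of k] by simp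
    also have "\<dots> = r k * Aa k" unfolding Aa_def by (simp add: field_simps)
    finally show "r k * Aa k = r (Suc k) * Cc (Suc k)" by simp
  qed
  have GR: "mu n * S n m = - T n m" for n m
  proof -
    have "(\<Sum>k\<le>N. r k * (Aa k * (poly (P n) (xk (Suc k)) - poly (P n) (xk k))
          + Cc k * (poly (P n) (q * xk (k)) - poly (P n) (xk k))) * poly (P m) (xk k)) = - T n m"
      unfolding T_def
      by (rule green[where Fm="\<lambda>k. poly (P n) (q * xk k)" and F="\<lambda>k. poly (P n) (xk k)"
            and G="\<lambda>k. poly (P m) (xk k)", OF AN C0 symk]) (simp add: qxSuc)
    moreover have "(\<Sum>k\<le>N. r k * (Aa k * (poly (P n) (xk (Suc k)) - poly (P n) (xk k))
          + Cc k * (poly (P n) (q * xk (k)) - poly (P n) (xk k))) * poly (P m) (xk k)) = mu n * S n m"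
      unfolding Lk[symmetric] S_def by (simp add: sum_distrib_left algebra_simps)
    ultimately show ?thesis by simp
  qed
  have Szero: "S n m = 0" if "n \<noteq> m" for n m
  proof -
    have "T n m = T m n" unfolding T_def by (simp add: algebra_simps)
    moreover have "S n m = S m n" unfolding S_def by (simp add: algebra_simps)
    ultimately have "mu n * S n m = mu m * S n m" using GR[of n m] GR[of m n] by simp
    then have "(mu n - mu m) * S n m = 0" by (simp add: algebra_simps)
    then show ?thesis using muinj[OF that] by simp
  qed
  define d where "d n = of_real ((1/q - 1) * a2) * Cst * of_real (S n n)" for n
  have dnz: "d n \<noteq> 0" if "n \<le> N" for n
  proof -
    have "(1/q - 1) * a2 \<noteq> 0" using q a by (simp add: field_simps)
    moreover have "Cst \<noteq> 0" by (simp add: Cst_def)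
    moreover have "S n n \<noteq> 0" using Spos[OF that] by simp
    ultimately show ?thesis by (simp add: d_def)
  qed
  show ?thesis
  proof (intro exI conjI allI impI)
    fix n assume "n \<le> N"
    then show "degree (P n) = n" "d n \<noteq> 0" using degP dnz by auto
  next
    fix n x show "\<sigma>1 x * qD (1/q) (qD q (poly (P n))) x + \<tau> x * qD q (poly (P n)) x
            + (- qnum q (int n) * (t1 + 1/2 * qnum (1/q) (int n - 1) * s1)) * poly (P n) x = 0"
      by (rule eqP)
  next
    fix m n assume "m \<le> N" "n \<le> N"
    show "qinv_int q a2 N (\<lambda>x. of_real (poly (P n) x * poly (P m) x) *
          (exp (\<alpha> * of_real (ln \<bar>x\<bar>)) *
           of_real (exp (1/2 * (log q x - 1) * ln x)
                    * qpoch_inf (q * a2 / x) q * qpoch_inf (x / (a1 / q)) q)))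
       = (if m = n then d n else 0)"
      unfolding key d_def using Szero by auto
  qed
qed

end
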